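(* For every integer $d\ge 2$ and every weighted graph $G=(V,E,w)$ with positive weights and $E\ne\emptyset$, $$\mathrm{MixedProd}_d(G)=\max_{f:V\to S^{d^2-2}}\frac12\left(\frac{d-1}{d}\right)\frac1W\sum_{(u,v)\in E}w_{uv}\left(1-\frac{\langle f(u),f(v)\rangle}{(d-1)^2}\right),$$ and consequently $\mathrm{MixedProd}_d(G)\le\frac{(d-1)^2+1}{2d(d-1)}=\frac12-\frac{d-2}{2d(d-1)}$.
   Context: $S^{d^2-2}$ is the unit sphere in $\mathbb R^{d^2-1}$. Let $h$ be the orthogonal projector onto the antisymmetric subspace of $\mathbb C^d\otimes\mathbb C^d$. For $G=(V,E,w)$, $W=\sum_e w_e$ and $H_G=\frac1W\sum_{(u,v)\in E}w_{uv}h_{uv}$ on $(\mathbb C^d)^{\otimes V}$, $h_{uv}$ acting as $h$ on qudits $u,v$ and identity elsewhere. $\mathrm{MixedProd}_d(G)=\max\operatorname{tr}\big(H_G\bigotimes_{v\in V}\rho_v\big)$ over $d\times d$ density matrices $\rho_v$ with $\operatorname{tr}(\rho_v^2)=\frac1{d-1}$ for all $v$. *)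

theory Defs
  imports "HOL-Analysis.Analysis" "HOL-Library.FuncSet"
begin

text \<open>A d x d complex matrix is represented as a function nat => nat => complex,
  only entries with indices < d being relevant.\<close>

definition density_matrix :: "nat \<Rightarrow> (nat \<Rightarrow> nat \<Rightarrow> complex) \<Rightarrow> bool" where
  "density_matrix d \<rho> \<longleftrightarrow>
     (\<forall>i<d. \<forall>j<d. \<rho> i j = cnj (\<rho> j i)) \<and>
     (\<forall>x :: nat \<Rightarrow> complex. 0 \<le> Re (\<Sum>i<d. \<Sum>j<d. cnj (x i) * \<rho> i j * x j)) \<and>
     (\<Sum>i<d. \<rho> i i) = 1"

definition purity :: "nat \<Rightarrow> (nat \<Rightarrow> nat \<Rightarrow> complex) \<Rightarrow> complex" where
  "purity d \<rho> = (\<Sum>i<d. \<Sum>j<d. \<rho> i j * \<rho> j i)"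

text \<open>The orthogonal projector onto the antisymmetric subspace of C^d (x) C^d,
  h = (I - SWAP)/2, entry <a b| h |c e>.\<close>
definition hproj :: "nat \<Rightarrow> nat \<Rightarrow> nat \<Rightarrow> nat \<Rightarrow> complex" where
  "hproj a b c e = ((if a = c \<and> b = e then 1 else 0) - (if a = e \<and> b = c then 1 else 0)) / 2"

text \<open>Computational basis of (C^d)^{(x)V}: tuples x : V -> {0..<d}.
  Operators on it are kernels (matrix entries) indexed by such tuples.\<close>
definition basis_idx :: "nat \<Rightarrow> 'a set \<Rightarrow> ('a \<Rightarrow> nat) set" where
  "basis_idx d V = PiE V (\<lambda>_. {..<d})"

definition h_on :: "'a set \<Rightarrow> 'a \<Rightarrow> 'a \<Rightarrow> ('a \<Rightarrow> nat) \<Rightarrow> ('a \<Rightarrow> nat) \<Rightarrow> complex" where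
  "h_on V u v x y = hproj (x u) (x v) (y u) (y v) *
     (if \<forall>t\<in>V - {u, v}. x t = y t then 1 else 0)"

definition total_weight :: "('a \<times> 'a) set \<Rightarrow> ('a \<times> 'a \<Rightarrow> real) \<Rightarrow> real" where
  "total_weight E w = (\<Sum>e\<in>E. w e)"

definition H_G :: "'a set \<Rightarrow> ('a \<times> 'a) set \<Rightarrow> ('a \<times> 'a \<Rightarrow> real) \<Rightarrow>
    ('a \<Rightarrow> nat) \<Rightarrow> ('a \<Rightarrow> nat) \<Rightarrow> complex" where
  "H_G V E w x y = (1 / complex_of_real (total_weight E w)) *
     (\<Sum>(u, v)\<in>E. complex_of_real (w (u, v)) * h_on V u v x y)"

definition prod_state :: "'a set \<Rightarrow> ('a \<Rightarrow> nat \<Rightarrow> nat \<Rightarrow> complex) \<Rightarrow>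
    ('a \<Rightarrow> nat) \<Rightarrow> ('a \<Rightarrow> nat) \<Rightarrow> complex" where
  "prod_state V \<rho> x y = (\<Prod>v\<in>V. \<rho> v (x v) (y v))"

definition tr_prod :: "nat \<Rightarrow> 'a set \<Rightarrow> (('a \<Rightarrow> nat) \<Rightarrow> ('a \<Rightarrow> nat) \<Rightarrow> complex) \<Rightarrow>
    (('a \<Rightarrow> nat) \<Rightarrow> ('a \<Rightarrow> nat) \<Rightarrow> complex) \<Rightarrow> complex" where
  "tr_prod d V A B = (\<Sum>x\<in>basis_idx d V. \<Sum>y\<in>basis_idx d V. A x y * B y x)"

text \<open>MixedProd_d(G): the maximum (supremum; it is attained by compactness) of
  tr(H_G (x)_v rho_v) over density matrices with tr(rho_v^2) = 1/(d-1).
  The trace is real since both operators are Hermitian; we take its real part.\<close>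
definition MixedProd :: "nat \<Rightarrow> 'a set \<Rightarrow> ('a \<times> 'a) set \<Rightarrow> ('a \<times> 'a \<Rightarrow> real) \<Rightarrow> real" where
  "MixedProd d V E w = Sup {Re (tr_prod d V (H_G V E w) (prod_state V \<rho>)) | \<rho>.
      \<forall>v\<in>V. density_matrix d (\<rho> v) \<and> purity d (\<rho> v) = 1 / (of_nat d - 1)}"

definition on_sphere :: "nat \<Rightarrow> (nat \<Rightarrow> real) \<Rightarrow> bool" where
  "on_sphere d p \<longleftrightarrow> (\<Sum>i<d^2 - 1. (p i)^2) = 1"

definition inner_d :: "nat \<Rightarrow> (nat \<Rightarrow> real) \<Rightarrow> (nat \<Rightarrow> real) \<Rightarrow> real" where
  "inner_d d p q = (\<Sum>i<d^2 - 1. p i * q i)"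

definition sphere_value :: "nat \<Rightarrow> ('a \<times> 'a) set \<Rightarrow> ('a \<times> 'a \<Rightarrow> real) \<Rightarrow> ('a \<Rightarrow> nat \<Rightarrow> real) \<Rightarrow> real" where
  "sphere_value d E w f = (1/2) * ((real d - 1) / real d) * (1 / total_weight E w) *
     (\<Sum>(u, v)\<in>E. w (u, v) * (1 - inner_d d (f u) (f v) / (real d - 1)^2))"

end

theory Submission
  imports Defs
begin


lemma sum_PiE_split2:
  fixes F :: "('a \<Rightarrow> 'b) \<Rightarrow> 'c::comm_monoid_add"
  assumes "u \<notin> V'" "v \<notin> V'" "u \<noteq> v" "finite V'" "finite (A u)" "finite (A v)" "\<And>t. finite (A t)"
  shows "(\<Sum>x\<in>PiE (insert u (insert v V')) A. F x) =
    (\<Sum>a\<in>A u. \<Sum>b\<in>A v. \<Sum>g\<in>PiE V' A. F (g(u:=a, v:=b)))"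
proof -
  have "(\<Sum>x\<in>PiE (insert u (insert v V')) A. F x) =
      (\<Sum>(a,b,g)\<in>A u \<times> A v \<times> PiE V' A. F (g(u:=a, v:=b)))"
    using assms
    by (intro sum.reindex_bij_witness[of _ "\<lambda>(a,b,g). g(u := a, v:=b)" "\<lambda>g. (g u, g v, g(u := undefined, v:=undefined))"])
       (auto simp: PiE_def extensional_def fun_upd_def intro!: arg_cong[where f=F])
  also have "\<dots> = (\<Sum>a\<in>A u. \<Sum>b\<in>A v. \<Sum>g\<in>PiE V' A. F (g(u:=a, v:=b)))"
    by (simp add: sum.cartesian_product)
  finally show ?thesis .
qed



lemma trace_edge:
  assumes "finite V" "u \<in> V" "v \<in> V" "u \<noteq> v"
  shows "(\<Sum>x\<in>basis_idx d V. \<Sum>y\<in>basis_idx d V. h_on V u v x y * prod_state V \<rho> y x) =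
    (\<Sum>a<d. \<Sum>b<d. \<Sum>c<d. \<Sum>e<d. hproj a b c e * \<rho> u c a * \<rho> v e b) *
    (\<Prod>t\<in>V-{u,v}. \<Sum>i<d. \<rho> t i i)"
proof -
  define V' where "V' = V - {u,v}"
  define P' where "P' = PiE V' (\<lambda>_. {..<d::nat})"
  have VV: "V = insert u (insert v V')" using assms unfolding V'_def by auto
  have fin: "finite V'" "u \<notin> V'" "v \<notin> V'" using assms unfolding V'_def by auto
  define Q where "Q g = (\<Prod>t\<in>V'. \<rho> t (g t) (g t))" for g :: "'a \<Rightarrow> nat"
  define K where "K a b c e = hproj a b c e * \<rho> u c a * \<rho> v e b" for a b c e
  have split: "\<And>F::('a\<Rightarrow>nat) \<Rightarrow> complex. (\<Sum>x\<in>basis_idx d V. F x) =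
     (\<Sum>a<d. \<Sum>b<d. \<Sum>g\<in>P'. F (g(u:=a, v:=b)))"
    unfolding basis_idx_def P'_def VV using fin assms(4)
    by (intro sum_PiE_split2) auto
  have eq1: "h_on V u v (g(u:=a, v:=b)) (g'(u:=c, v:=e)) * prod_state V \<rho> (g'(u:=c, v:=e)) (g(u:=a, v:=b))
     = K a b c e * ((if g = g' then 1 else 0) * (\<Prod>t\<in>V'. \<rho> t (g' t) (g t)))"
    if "g \<in> P'" "g' \<in> P'" for g g' a b c e
  proof -
    have "(\<forall>t\<in>V - {u, v}. (g(u:=a, v:=b)) t = (g'(u:=c, v:=e)) t) \<longleftrightarrow> g = g'"
    proof
      assume "\<forall>t\<in>V - {u, v}. (g(u:=a, v:=b)) t = (g'(u:=c, v:=e)) t"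
      then have "\<forall>t\<in>V'. g t = g' t" unfolding V'_def by auto
      then show "g = g'" using that unfolding P'_def by (auto simp: PiE_def extensional_def intro!: ext)
    qed auto
    moreover have "prod_state V \<rho> (g'(u:=c, v:=e)) (g(u:=a, v:=b)) =
       \<rho> u c a * \<rho> v e b * (\<Prod>t\<in>V'. \<rho> t (g' t) (g t))"
    proof -
      have "(\<Prod>t\<in>V'. \<rho> t ((g'(u:=c, v:=e)) t) ((g(u:=a, v:=b)) t)) = (\<Prod>t\<in>V'. \<rho> t (g' t) (g t))"
        using fin by (intro prod.cong) auto
      then show ?thesis unfolding prod_state_def VV using fin assms(4) by (simp add: mult_ac)
    qed
    ultimately show ?thesis
      unfolding h_on_def K_def using assms(4) by (simp add: mult_ac)
  qed
  have "(\<Sum>x\<in>basis_idx d V. \<Sum>y\<in>basis_idx d V. h_on V u v x y * prod_state V \<rho> y x) =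
    (\<Sum>a<d. \<Sum>b<d. \<Sum>g\<in>P'. \<Sum>c<d. \<Sum>e<d. \<Sum>g'\<in>P'. K a b c e * ((if g = g' then 1 else 0) * (\<Prod>t\<in>V'. \<rho> t (g' t) (g t))))"
    unfolding split by (intro sum.cong refl) (simp add: eq1)
  also have "\<dots> = (\<Sum>a<d. \<Sum>b<d. \<Sum>g\<in>P'. \<Sum>c<d. \<Sum>e<d. K a b c e * Q g)"
  proof (intro sum.cong refl)
    fix a b c e g assume "g \<in> P'"
    have "(\<Sum>g'\<in>P'. K a b c e * ((if g = g' then 1 else 0) * (\<Prod>t\<in>V'. \<rho> t (g' t) (g t))))
       = K a b c e * (\<Sum>g'\<in>P'. (if g = g' then (\<Prod>t\<in>V'. \<rho> t (g' t) (g t)) else 0))"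
      by (subst sum_distrib_left) (intro sum.cong refl; simp)
    also have "\<dots> = K a b c e * Q g" using \<open>g \<in> P'\<close> unfolding Q_def
      using fin by (simp add: P'_def sum.delta sum.delta' finite_PiE)
    finally show "(\<Sum>g'\<in>P'. K a b c e * ((if g = g' then 1 else 0) * (\<Prod>t\<in>V'. \<rho> t (g' t) (g t)))) = K a b c e * Q g" .
  qed
  also have "\<dots> = (\<Sum>a<d. \<Sum>b<d. \<Sum>c<d. \<Sum>e<d. K a b c e * (\<Sum>g\<in>P'. Q g))"
    by (simp add: sum_distrib_left sum.swap[of _ P'])
  also have "\<dots> = (\<Sum>a<d. \<Sum>b<d. \<Sum>c<d. \<Sum>e<d. K a b c e) * (\<Sum>g\<in>P'. Q g)"
    by (simp add: sum_distrib_right)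
  also have "(\<Sum>g\<in>P'. Q g) = (\<Prod>t\<in>V-{u,v}. \<Sum>i<d. \<rho> t i i)"
    unfolding Q_def P'_def V'_def[symmetric]
    using prod_sum_PiE[of V' "\<lambda>_. {..<d}" "\<lambda>t i. \<rho> t i i"] fin by simp
  finally show ?thesis unfolding K_def .
qed



definition tr2 :: "nat \<Rightarrow> (nat \<Rightarrow> nat \<Rightarrow> complex) \<Rightarrow> (nat \<Rightarrow> nat \<Rightarrow> complex) \<Rightarrow> complex" where
  "tr2 d A B = (\<Sum>i<d. \<Sum>j<d. A i j * B j i)"

lemma hproj_mult: "(hproj a b c e * X :: complex) = ((if a = c \<and> b = e then X else 0) - (if a = e \<and> b = c then X else 0)) / 2"
proof -
  have gen: "((if P then 1 else 0) - (if Q then 1 else 0)) / 2 * X = ((if P then X else 0) - (if Q then X else 0)) / (2::complex)" for P Q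
    by (cases P; cases Q) simp_all
  show ?thesis unfolding hproj_def by (rule gen)
qed

lemma delta2:
  assumes "a < d" "b < (d::nat)"
  shows "(\<Sum>c<d. \<Sum>e<d. (if a = c \<and> b = e then f c e else 0)) = (f a b :: complex)"
proof -
  have "(\<Sum>c<d. \<Sum>e<d. (if a = c \<and> b = e then f c e else 0)) =
        (\<Sum>c<d. if a = c then (\<Sum>e<d. if b = e then f c e else 0) else 0)"
    by (intro sum.cong refl) auto
  also have "\<dots> = f a b" using assms by (simp add: sum.delta)
  finally show ?thesis .
qed

lemma delta2':
  assumes "a < d" "b < (d::nat)"
  shows "(\<Sum>c<d. \<Sum>e<d. (if a = e \<and> b = c then f c e else 0)) = (f b a :: complex)"
proof -
  have "(\<Sum>c<d. \<Sum>e<d. (if a = e \<and> b = c then f c e else 0)) =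
        (\<Sum>c<d. if b = c then (\<Sum>e<d. if a = e then f c e else 0) else 0)"
    by (intro sum.cong refl) auto
  also have "\<dots> = f b a" using assms by (simp add: sum.delta)
  finally show ?thesis .
qed

lemma hproj_sum:
  "(\<Sum>a<d. \<Sum>b<d. \<Sum>c<d. \<Sum>e<d. hproj a b c e * A c a * B e b) =
    ((\<Sum>a<d. A a a) * (\<Sum>b<d. B b b) - tr2 d A B) / 2"
proof -
  have "(\<Sum>a<d. \<Sum>b<d. \<Sum>c<d. \<Sum>e<d. hproj a b c e * A c a * B e b) =
     (\<Sum>a<d. \<Sum>b<d. \<Sum>c<d. \<Sum>e<d. ((if a = c \<and> b = e then A c a * B e b else 0) -
        (if a = e \<and> b = c then A c a * B e b else 0)) / 2)"
    by (intro sum.cong refl) (subst mult.assoc, rule hproj_mult)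
  also have "\<dots> = (\<Sum>a<d. \<Sum>b<d. ((\<Sum>c<d. \<Sum>e<d. (if a = c \<and> b = e then A c a * B e b else 0)) -
        (\<Sum>c<d. \<Sum>e<d. (if a = e \<and> b = c then A c a * B e b else 0))) / 2)"
    by (simp only: diff_divide_distrib sum_divide_distrib sum_subtractf)
  also have "\<dots> = (\<Sum>a<d. \<Sum>b<d. (A a a * B b b - A b a * B a b) / 2)"
    by (intro sum.cong refl) (simp add: delta2 delta2')
  also have "\<dots> = ((\<Sum>a<d. A a a) * (\<Sum>b<d. B b b) - tr2 d A B) / 2"
  proof -
    have 1: "(\<Sum>a<d. \<Sum>b<d. A a a * B b b) = (\<Sum>a<d. A a a) * (\<Sum>b<d. B b b)"
      by (simp add: sum_product)
    have 2: "(\<Sum>a<d. \<Sum>b<d. A b a * B a b) = tr2 d A B"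
      unfolding tr2_def by (rule sum.swap)
    show ?thesis
      by (simp only: sum_divide_distrib[symmetric] sum_subtractf 1 2)
  qed
  finally show ?thesis .
qed

lemma trace_formula:
  assumes "finite V" "E \<subseteq> V \<times> V" "\<forall>(u, v)\<in>E. u \<noteq> v" "\<forall>t\<in>V. (\<Sum>i<d. \<rho> t i i) = 1"
  shows "tr_prod d V (H_G V E w) (prod_state V \<rho>) =
    (1 / complex_of_real (total_weight E w)) *
    (\<Sum>(u, v)\<in>E. complex_of_real (w (u, v)) * ((1 - tr2 d (\<rho> u) (\<rho> v)) / 2))"
proof -
  have "tr_prod d V (H_G V E w) (prod_state V \<rho>) =
    (1 / complex_of_real (total_weight E w)) *
    (\<Sum>x\<in>basis_idx d V. \<Sum>y\<in>basis_idx d V. \<Sum>e\<in>E. complex_of_real (w e) * (h_on V (fst e) (snd e) x y * prod_state V \<rho> y x))"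
    unfolding tr_prod_def H_G_def
    by (simp only: sum_distrib_left sum_distrib_right mult.assoc case_prod_unfold prod.collapse)
  also have "\<dots> = (1 / complex_of_real (total_weight E w)) *
    (\<Sum>e\<in>E. complex_of_real (w e) *
      (\<Sum>x\<in>basis_idx d V. \<Sum>y\<in>basis_idx d V. h_on V (fst e) (snd e) x y * prod_state V \<rho> y x))"
    by (simp only: sum_distrib_left sum.swap[of _ E] sum.swap[of _ E "basis_idx d V"])
  also have "\<dots> = (1 / complex_of_real (total_weight E w)) *
    (\<Sum>(u, v)\<in>E. complex_of_real (w (u, v)) * ((1 - tr2 d (\<rho> u) (\<rho> v)) / 2))"
    unfolding case_prod_unfold
  proof (intro arg_cong[where f="\<lambda>z. _ * z"] sum.cong refl)
    fix e assume uv: "e \<in> E"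
    then have "fst e \<in> V" "snd e \<in> V" "fst e \<noteq> snd e" using assms(2,3) by auto
    then show "complex_of_real (w e) *
      (\<Sum>x\<in>basis_idx d V. \<Sum>y\<in>basis_idx d V. h_on V (fst e) (snd e) x y * prod_state V \<rho> y x) =
      complex_of_real (w (fst e, snd e)) * ((1 - tr2 d (\<rho> (fst e)) (\<rho> (snd e))) / 2)"
      using assms(1,4) by (simp add: trace_edge hproj_sum)
  qed
  finally show ?thesis .
qed



lemma pair_lt: "i < d \<Longrightarrow> j < (d::nat) \<Longrightarrow> i*d+j < d*d"
proof -
  assume p: "i < d" "j < d"
  have "i*d+j < i*d + d" using p by simp
  also have "\<dots> = (i+1)*d" by simp
  also have "\<dots> \<le> d*d" using p by (intro mult_right_mono) auto
  finally show ?thesis .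
qed

lemma reindex_pairs0:
  assumes "d \<ge> (1::nat)"
  shows "(\<Sum>k<d*d. \<phi> (k div d) (k mod d)) = (\<Sum>i<d. \<Sum>j<d. \<phi> i j :: real)"
proof -
  have "(\<Sum>k<d*d. \<phi> (k div d) (k mod d)) = (\<Sum>(i,j)\<in>{..<d}\<times>{..<d}. \<phi> i j)"
    by (rule sum.reindex_bij_witness[of _ "\<lambda>(i,j). i*d+j" "\<lambda>k. (k div d, k mod d)"])
       (use assms in \<open>auto simp: less_mult_imp_div_less pair_lt\<close>)
  then show ?thesis by (simp add: sum.cartesian_product)
qed

lemma reindex_pairs:
  assumes "d \<ge> (1::nat)"
  shows "(\<Sum>k<d^2 - 1. \<phi> (k div d) (k mod d)) = (\<Sum>i<d. \<Sum>j<d. \<phi> i j) - (\<phi> (d-1) (d-1) :: real)"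
proof -
  have dd: "d*d = Suc (d^2 - 1)" using assms by (simp add: power2_eq_square)
  have "(d^2 - 1) div d = d - 1" "(d^2 - 1) mod d = d - 1"
  proof -
    obtain m where m: "d = Suc m" using assms by (cases d) auto
    have e: "d^2 - 1 = (d-1) + (d-1)*d" unfolding m by (simp add: power2_eq_square algebra_simps)
    have "(m + m*d) div d = m + m div d" using m by (intro div_mult_self1) simp
    moreover have "(m + m*d) mod d = m mod d" by simp
    ultimately show "(d^2 - 1) div d = d - 1" "(d^2 - 1) mod d = d - 1" unfolding e using m by simp_all
  qed
  then show ?thesis using reindex_pairs0[OF assms, of \<phi>] unfolding dd by simp
qed

lemma pair_split:
  fixes \<phi> :: "nat \<Rightarrow> nat \<Rightarrow> real"
  shows "(\<Sum>i<d. \<Sum>j<d. \<phi> i j) = (\<Sum>i<d. \<Sum>j<d. if i < j then \<phi> i j + \<phi> j i else 0) + (\<Sum>i<d. \<phi> i i)"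
proof -
  have "(\<Sum>i<d. \<Sum>j<d. \<phi> i j) = (\<Sum>i<d. \<Sum>j<d. (if i < j then \<phi> i j else 0) + (if j < i then \<phi> i j else 0) + (if i = j then \<phi> i j else 0))"
    by (intro sum.cong refl) auto
  also have "\<dots> = (\<Sum>i<d. \<Sum>j<d. if i < j then \<phi> i j else 0) + (\<Sum>i<d. \<Sum>j<d. if j < i then \<phi> i j else 0) + (\<Sum>i<d. \<Sum>j<d. if i = j then \<phi> i j else 0)"
    by (simp add: sum.distrib)
  also have "(\<Sum>i<d. \<Sum>j<d. if j < i then \<phi> i j else 0) = (\<Sum>j<d. \<Sum>i<d. if j < i then \<phi> i j else 0)"
    by (rule sum.swap)
  also have "(\<Sum>i<d. \<Sum>j<d. if i = j then \<phi> i j else 0) = (\<Sum>i<d. \<phi> i i)"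
    by (simp add: sum.delta)
  also have "(\<Sum>i<d. \<Sum>j<d. if i < j then \<phi> i j else 0) + (\<Sum>j<d. \<Sum>i<d. if j < i then \<phi> i j else 0)
      = (\<Sum>i<d. \<Sum>j<d. if i < j then \<phi> i j + \<phi> j i else 0)"
    by (simp only: sum.distrib[symmetric]) (intro sum.cong refl; simp)
  finally show ?thesis .
qed



definition herm :: "nat \<Rightarrow> (nat \<Rightarrow> nat \<Rightarrow> complex) \<Rightarrow> bool" where
  "herm d B \<longleftrightarrow> (\<forall>i<d. \<forall>j<d. B i j = cnj (B j i))"

definition cc :: "nat \<Rightarrow> real" where
  "cc d = (sqrt (real d) - 1) / (real d - 1)"

definition Fp :: "nat \<Rightarrow> (nat \<Rightarrow> nat \<Rightarrow> complex) \<Rightarrow> nat \<Rightarrow> nat \<Rightarrow> real" where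
  "Fp d B i j = (if i < j then sqrt 2 * Re (B i j) else if j < i then sqrt 2 * Im (B j i)
     else Re (B i i) + cc d * (\<Sum>l<d-1. Re (B l l)))"

definition Fv :: "nat \<Rightarrow> (nat \<Rightarrow> nat \<Rightarrow> complex) \<Rightarrow> nat \<Rightarrow> real" where
  "Fv d B k = Fp d B (k div d) (k mod d)"

lemma cc_prop:
  assumes "d \<ge> 2"
  shows "2 * cc d + (real d - 1) * (cc d)^2 = 1"
proof -
  define s where "s = sqrt (real d)"
  have s2: "s^2 = real d" unfolding s_def by simp
  have d1: "real d - 1 \<noteq> 0" using assms by simp
  have gen: "2 * (x / D) + D * (x / D)^2 = (2 * x + x^2) / D" if "D \<noteq> 0" for x D :: real
    using that by (simp add: power2_eq_square field_simps)
  have "2 * cc d + (real d - 1) * (cc d)^2 = (2 * (s - 1) + (s - 1)^2) / (real d - 1)"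
    unfolding cc_def s_def[symmetric] using d1 by (rule gen)
  also have "2 * (s - 1) + (s - 1)^2 = s^2 - 1"
    by (simp add: power2_eq_square algebra_simps)
  finally show ?thesis using d1 s2 by simp
qed

lemma herm_D: "herm d B \<Longrightarrow> i < d \<Longrightarrow> j < d \<Longrightarrow> B i j = cnj (B j i)"
  unfolding herm_def by blast

lemma herm_diag_real: "herm d B \<Longrightarrow> i < d \<Longrightarrow> Im (B i i) = 0"
  unfolding herm_def by (metis cnj.simps(2) neg_equal_zero)

lemma inner_F:
  assumes d: "d \<ge> 2" and hB: "herm d B" and hC: "herm d C"
    and tB: "(\<Sum>i<d. B i i) = 0" and tC: "(\<Sum>i<d. C i i) = 0"
  shows "inner_d d (Fv d B) (Fv d C) = Re (tr2 d B C)"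
proof -
  define m where "m = d - 1"
  have dm: "d = Suc m" using d unfolding m_def by simp
  define \<phi> where "\<phi> i j = Fp d B i j * Fp d C i j" for i j
  define \<psi> where "\<psi> i j = Re (B i j * C j i)" for i j
  have "inner_d d (Fv d B) (Fv d C) = (\<Sum>i<d. \<Sum>j<d. \<phi> i j) - \<phi> (d-1) (d-1)"
    unfolding inner_d_def Fv_def \<phi>_def using d by (intro reindex_pairs) simp
  also have "\<dots> = (\<Sum>i<d. \<Sum>j<d. if i < j then \<phi> i j + \<phi> j i else 0) + ((\<Sum>i<d. \<phi> i i) - \<phi> (d-1) (d-1))"
    using pair_split[of \<phi> d] by simp
  also have "(\<Sum>i<d. \<Sum>j<d. if i < j then \<phi> i j + \<phi> j i else 0) = (\<Sum>i<d. \<Sum>j<d. if i < j then \<psi> i j + \<psi> j i else 0)"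
  proof (intro sum.cong refl)
    fix i j assume ij: "i \<in> {..<d}" "j \<in> {..<d}"
    show "(if i < j then \<phi> i j + \<phi> j i else 0) = (if i < j then \<psi> i j + \<psi> j i else 0)"
    proof (cases "i < j")
      case True
      have bji: "B j i = cnj (B i j)" using ij by (intro herm_D[OF hB]) auto
      have cji: "C j i = cnj (C i j)" using ij by (intro herm_D[OF hC]) auto
      have "\<phi> i j + \<phi> j i = 2 * (Re (B i j) * Re (C i j) + Im (B i j) * Im (C i j))"
        unfolding \<phi>_def Fp_def using True by (simp add: algebra_simps)
      moreover have "\<psi> i j + \<psi> j i = 2 * (Re (B i j) * Re (C i j) + Im (B i j) * Im (C i j))"
        unfolding \<psi>_def bji cji by (simp add: algebra_simps)
      ultimately show ?thesis by simp
    qed simp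
  qed
  also have "(\<Sum>i<d. \<phi> i i) - \<phi> (d-1) (d-1) = (\<Sum>i<d. \<psi> i i)"
  proof -
    define SB where "SB = (\<Sum>l<m. Re (B l l))"
    define SC where "SC = (\<Sum>l<m. Re (C l l))"
    have mB: "Re (B m m) = - SB" using arg_cong[OF tB, of Re] unfolding SB_def dm by (simp add: Re_sum)
    have mC: "Re (C m m) = - SC" using arg_cong[OF tC, of Re] unfolding SC_def dm by (simp add: Re_sum)
    have "(\<Sum>i<d. \<phi> i i) - \<phi> (d-1) (d-1) = (\<Sum>i<m. \<phi> i i)" unfolding dm by simp
    also have "\<dots> = (\<Sum>i<m. (Re (B i i) + cc d * SB) * (Re (C i i) + cc d * SC))"
      unfolding \<phi>_def Fp_def SB_def SC_def m_def by simp
    also have "\<dots> = (\<Sum>i<m. Re (B i i) * Re (C i i)) + (2 * cc d + real m * (cc d)^2) * SB * SC"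
    proof -
      have gen: "(\<Sum>i<m. (b i + x) * (c i + y)) = (\<Sum>i<m. b i * c i) + y * (\<Sum>i<m. b i) + x * (\<Sum>i<m. c i) + real m * x * y"
        for b c :: "nat \<Rightarrow> real" and x y
        by (simp add: algebra_simps sum.distrib sum_distrib_left)
      show ?thesis unfolding gen unfolding SB_def[symmetric] SC_def[symmetric]
        by (simp add: algebra_simps power2_eq_square)
    qed
    also have "2 * cc d + real m * (cc d)^2 = 1" using cc_prop[OF d] d unfolding m_def by (simp add: of_nat_diff)
    also have "(\<Sum>i<m. Re (B i i) * Re (C i i)) + 1 * SB * SC = (\<Sum>i<d. \<psi> i i)"
    proof -
      have "\<psi> i i = Re (B i i) * Re (C i i)" if "i < d" for i
        using herm_diag_real[OF hB that] herm_diag_real[OF hC that] unfolding \<psi>_def by simp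
      then have "(\<Sum>i<d. \<psi> i i) = (\<Sum>i<d. Re (B i i) * Re (C i i))" by simp
      also have "\<dots> = (\<Sum>i<m. Re (B i i) * Re (C i i)) + SB * SC" unfolding dm using mB mC by simp
      finally show ?thesis by simp
    qed
    finally show ?thesis .
  qed
  also have "(\<Sum>i<d. \<Sum>j<d. if i < j then \<psi> i j + \<psi> j i else 0) + (\<Sum>i<d. \<psi> i i) = (\<Sum>i<d. \<Sum>j<d. \<psi> i j)"
    by (rule pair_split[symmetric])
  also have "\<dots> = Re (tr2 d B C)" unfolding tr2_def \<psi>_def by (simp add: Re_sum)
  finally show ?thesis .
qed



definition Gm :: "nat \<Rightarrow> (nat \<Rightarrow> real) \<Rightarrow> nat \<Rightarrow> nat \<Rightarrow> complex" where
  "Gm d p i j = (let q = (\<lambda>i j. p (i*d+j)); t = cc d * (\<Sum>l<d-1. q l l) / sqrt (real d) in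
     if i < j then Complex (q i j / sqrt 2) (q j i / sqrt 2)
     else if j < i then Complex (q j i / sqrt 2) (- (q i j / sqrt 2))
     else if i < d - 1 then complex_of_real (q i i - t)
     else complex_of_real (- (\<Sum>l<d-1. q l l - t)))"

lemma herm_Gm: "herm d (Gm d p)"
  unfolding herm_def
proof (intro allI impI)
  fix i j assume "i < d" "j < d"
  show "Gm d p i j = cnj (Gm d p j i)"
    by (cases "i < j"; cases "j < i") (auto simp: Gm_def Let_def complex_eq_iff)
qed

lemma trace_Gm: "d \<ge> 1 \<Longrightarrow> (\<Sum>i<d. Gm d p i i) = 0"
proof -
  assume "d \<ge> 1"
  then obtain m where dm: "d = Suc m" by (cases d) auto
  define r where "r l = p (l*d+l) - cc d * (\<Sum>l<d-1. p (l*d+l)) / sqrt (real d)" for l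
  have 1: "Gm d p i i = complex_of_real (r i)" if "i < m" for i
    using that unfolding Gm_def Let_def r_def dm by simp
  have 2: "Gm d p m m = complex_of_real (- (\<Sum>l<m. r l))"
    unfolding Gm_def Let_def r_def dm by simp
  have "(\<Sum>i<d. Gm d p i i) = (\<Sum>i<m. Gm d p i i) + Gm d p m m"
    by (simp add: dm)
  also have "\<dots> = (\<Sum>i<m. complex_of_real (r i)) + complex_of_real (- (\<Sum>l<m. r l))"
    using 1 2 by simp
  also have "\<dots> = 0" by (simp add: of_real_sum[symmetric] del: of_real_sum)
  finally show ?thesis .
qed

lemma m_cc: "d \<ge> 2 \<Longrightarrow> real (d - 1) * cc d = sqrt (real d) - 1"
  unfolding cc_def by (simp add: of_nat_diff)

lemma F_Gm:
  assumes d: "d \<ge> 2" and k: "k < d^2 - 1"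
  shows "Fv d (Gm d p) k = p k"
proof -
  define i where "i = k div d"
  define j where "j = k mod d"
  have kij: "k = i*d + j" unfolding i_def j_def by simp
  have kdd: "k < d*d" using k by (simp add: power2_eq_square)
  have ij: "i < d" "j < d" unfolding i_def j_def using kdd d by (auto simp: less_mult_imp_div_less)
  have notm: "\<not> (i = d-1 \<and> j = d-1)"
  proof
    assume "i = d-1 \<and> j = d-1"
    then have "k = (d-1)*d + (d-1)" using kij by simp
    also have "\<dots> = d^2 - 1" using d by (simp add: power2_eq_square algebra_simps)
    finally show False using k by simp
  qed
  define q where "q i j = p (i*d+j)" for i j
  define S where "S = (\<Sum>l<d-1. q l l)"
  define t where "t = cc d * S / sqrt (real d)"
  have "Fv d (Gm d p) k = Fp d (Gm d p) i j" unfolding Fv_def i_def j_def ..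
  also have "\<dots> = q i j"
  proof (cases "i < j")
    case True then show ?thesis unfolding Fp_def Gm_def q_def Let_def by simp
  next
    case False
    show ?thesis
    proof (cases "j < i")
      case True then show ?thesis unfolding Fp_def Gm_def q_def Let_def by simp
    next
      case False2: False
      with False have ii: "i = j" by simp
      with notm ij have im: "i < d - 1" by auto
      have diag: "Re (Gm d p l l) = q l l - t" if "l < d - 1" for l
        using that unfolding Gm_def q_def Let_def t_def S_def by simp
      have "(\<Sum>l<d-1. Re (Gm d p l l)) = S - real (d-1) * t"
        unfolding S_def using diag by (simp add: sum_subtractf)
      moreover have "cc d * (S - real (d-1) * t) = t"
      proof -
        have sd: "sqrt (real d) > 0" using d by simp
        have "cc d * (S - real (d-1) * t) = cc d * S - (real (d-1) * cc d) * t" by (simp add: algebra_simps)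
        also have "\<dots> = cc d * S - (sqrt (real d) - 1) * t" using m_cc[OF d] by simp
        also have "\<dots> = t" unfolding t_def using sd by (simp add: field_simps)
        finally show ?thesis .
      qed
      ultimately show ?thesis using ii im diag[OF im] unfolding Fp_def by simp
    qed
  qed
  also have "\<dots> = p k" unfolding q_def kij ..
  finally show ?thesis .
qed



lemma cs_double:
  fixes X Y :: "nat \<Rightarrow> nat \<Rightarrow> complex"
  shows "cmod (\<Sum>i<d. \<Sum>j<d. X i j * Y i j) \<le>
    sqrt (\<Sum>i<d. \<Sum>j<d. (cmod (X i j))^2) * sqrt (\<Sum>i<d. \<Sum>j<d. (cmod (Y i j))^2)"
proof -
  define P where "P = {..<d} \<times> {..<d::nat}"
  define f where "f p = cmod (X (fst p) (snd p))" for p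
  define g where "g p = cmod (Y (fst p) (snd p))" for p
  have "cmod (\<Sum>i<d. \<Sum>j<d. X i j * Y i j) \<le> (\<Sum>i<d. cmod (\<Sum>j<d. X i j * Y i j))"
    by (rule norm_sum)
  also have "\<dots> \<le> (\<Sum>i<d. \<Sum>j<d. cmod (X i j) * cmod (Y i j))"
    by (intro sum_mono) (metis (no_types, lifting) norm_mult norm_sum sum.cong)
  also have "\<dots> = (\<Sum>p\<in>P. \<bar>f p\<bar> * \<bar>g p\<bar>)"
    unfolding P_def f_def g_def by (simp add: sum.cartesian_product case_prod_unfold)
  also have "\<dots> \<le> L2_set f P * L2_set g P" by (rule L2_set_mult_ineq)
  also have "L2_set f P = sqrt (\<Sum>i<d. \<Sum>j<d. (cmod (X i j))^2)"
    unfolding L2_set_def P_def f_def by (simp add: sum.cartesian_product case_prod_unfold)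
  also have "L2_set g P = sqrt (\<Sum>i<d. \<Sum>j<d. (cmod (Y i j))^2)"
    unfolding L2_set_def P_def g_def by (simp add: sum.cartesian_product case_prod_unfold)
  finally show ?thesis .
qed

lemma tr2_shift:
  "tr2 d (\<lambda>i j. (if i = j then \<alpha> else 0) + B i j) (\<lambda>i j. (if i = j then \<beta> else 0) + C i j) =
   of_nat d * \<alpha> * \<beta> + \<alpha> * (\<Sum>i<d. C i i) + \<beta> * (\<Sum>i<d. B i i) + tr2 d B C"
proof -
  have "tr2 d (\<lambda>i j. (if i = j then \<alpha> else 0) + B i j) (\<lambda>i j. (if i = j then \<beta> else 0) + C i j) =
    (\<Sum>i<d. \<Sum>j<d. (if i = j then \<alpha> * \<beta> + \<alpha> * C j i + \<beta> * B i j else 0) + B i j * C j i)"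
    unfolding tr2_def by (intro sum.cong refl) (auto simp: algebra_simps)
  also have "\<dots> = (\<Sum>i<d. \<alpha> * \<beta> + \<alpha> * C i i + \<beta> * B i i) + tr2 d B C"
    unfolding tr2_def by (simp add: sum.distrib sum.delta)
  also have "\<dots> = of_nat d * \<alpha> * \<beta> + \<alpha> * (\<Sum>i<d. C i i) + \<beta> * (\<Sum>i<d. B i i) + tr2 d B C"
    by (simp add: sum.distrib sum_distrib_left)
  finally show ?thesis .
qed

lemma tr2_herm_self:
  assumes "herm d A"
  shows "tr2 d A A = complex_of_real (\<Sum>i<d. \<Sum>j<d. (cmod (A i j))^2)"
proof -
  have "tr2 d A A = (\<Sum>i<d. \<Sum>j<d. complex_of_real ((cmod (A i j))^2))"
    unfolding tr2_def
  proof (intro sum.cong refl)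
    fix i j assume "i \<in> {..<d}" "j \<in> {..<d}"
    then have "A j i = cnj (A i j)" by (intro herm_D[OF assms]) auto
    then show "A i j * A j i = complex_of_real ((cmod (A i j))^2)" by (simp only: complex_norm_square)
  qed
  then show ?thesis by simp
qed



lemma sum_D_sq:
  fixes a :: "nat \<Rightarrow> real"
  assumes d: "d \<ge> 1" and N: "N = (\<Sum>i<d. a i)"
  shows "(\<Sum>i<d. \<Sum>j<d. if i = j then (a i - N / real d)^2 else a i * a j) = N^2 * (real d - 1) / real d"
proof -
  have "(\<Sum>i<d. \<Sum>j<d. if i = j then (a i - N / real d)^2 else a i * a j) =
     (\<Sum>i<d. \<Sum>j<d. a i * a j + (if i = j then (a i - N / real d)^2 - a i * a i else 0))"
    by (intro sum.cong refl) auto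
  also have "\<dots> = (\<Sum>i<d. \<Sum>j<d. a i * a j) + (\<Sum>i<d. (a i - N / real d)^2 - a i * a i)"
    by (simp add: sum.distrib sum.delta)
  also have "(\<Sum>i<d. \<Sum>j<d. a i * a j) = N^2" unfolding N by (simp add: power2_eq_square sum_product)
  also have "(\<Sum>i<d. (a i - N / real d)^2 - a i * a i) = (\<Sum>i<d. (N / real d)^2 - 2 * (N / real d) * a i)"
    by (intro sum.cong refl) (simp add: power2_eq_square algebra_simps)
  also have "\<dots> = real d * (N / real d)^2 - 2 * (N / real d) * N"
    unfolding N by (simp add: sum_subtractf sum_distrib_left)
  also have "N^2 + (real d * (N / real d)^2 - 2 * (N / real d) * N) = N^2 * (real d - 1) / real d"
    using d by (simp add: field_simps power2_eq_square)
  finally show ?thesis .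
qed

lemma psd:
  assumes d: "d \<ge> 2" and h: "herm d \<rho>" and tr: "(\<Sum>i<d. \<rho> i i) = 1"
    and pur: "Re (tr2 d \<rho> \<rho>) = 1 / (real d - 1)"
  shows "0 \<le> Re (\<Sum>i<d. \<Sum>j<d. cnj (x i) * \<rho> i j * x j)"
proof -
  define c where "c = complex_of_real (1 / real d)"
  define B where "B i j = \<rho> i j - (if i = j then c else 0)" for i j
  have rho_eq: "\<rho> = (\<lambda>i j. (if i = j then c else 0) + B i j)" unfolding B_def by auto
  have hB: "herm d B" unfolding herm_def
  proof (intro allI impI)
    fix i j assume "i < d" "j < d"
    then have "\<rho> i j = cnj (\<rho> j i)" by (rule herm_D[OF h])
    then show "B i j = cnj (B j i)" unfolding B_def c_def by simp
  qed
  have tB: "(\<Sum>i<d. B i i) = 0"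
    using tr d unfolding B_def c_def by (simp add: sum_subtractf)
  have "tr2 d \<rho> \<rho> = of_nat d * c * c + tr2 d B B"
    by (subst (1 2) rho_eq) (simp add: tr2_shift tB)
  then have "Re (tr2 d B B) = 1 / (real d - 1) - 1 / real d"
    using pur d unfolding c_def by (simp add: power2_eq_square)
  also have "\<dots> = 1 / (real d * (real d - 1))" using d by (simp add: field_simps)
  finally have SB: "(\<Sum>i<d. \<Sum>j<d. (cmod (B i j))^2) = 1 / (real d * (real d - 1))"
    using tr2_herm_self[OF hB] by simp
  define a where "a i = (cmod (x i))^2" for i
  define N where "N = (\<Sum>i<d. a i)"
  have N0: "N \<ge> 0" unfolding N_def a_def by (simp add: sum_nonneg)
  define D where "D i j = x j * cnj (x i) - (if i = j then complex_of_real (N / real d) else 0)" for i j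
  define q where "q = (\<Sum>i<d. \<Sum>j<d. B i j * D i j)"
  have xx: "cnj (x i) * x i = complex_of_real (a i)" for i
    unfolding a_def using complex_norm_square[of "x i"] by (simp add: mult.commute)
  have Qeq: "(\<Sum>i<d. \<Sum>j<d. cnj (x i) * \<rho> i j * x j) = q + complex_of_real (N / real d)"
  proof -
    have "(\<Sum>i<d. \<Sum>j<d. cnj (x i) * \<rho> i j * x j) =
      (\<Sum>i<d. \<Sum>j<d. B i j * D i j + (if i = j then c * (cnj (x i) * x i) + B i i * complex_of_real (N / real d) else 0))"
      unfolding B_def D_def by (intro sum.cong refl) (auto simp: algebra_simps diff_divide_distrib)
    also have "\<dots> = q + (\<Sum>i<d. c * (cnj (x i) * x i) + B i i * complex_of_real (N / real d))"
      unfolding q_def by (simp add: sum.distrib sum.delta)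
    also have "(\<Sum>i<d. c * (cnj (x i) * x i) + B i i * complex_of_real (N / real d)) = c * complex_of_real N"
    proof -
      have "(\<Sum>i<d. c * (cnj (x i) * x i) + B i i * complex_of_real (N / real d)) =
         c * (\<Sum>i<d. cnj (x i) * x i) + (\<Sum>i<d. B i i) * complex_of_real (N / real d)"
        by (simp add: sum.distrib sum_distrib_left sum_distrib_right sum_divide_distrib)
      also have "(\<Sum>i<d. cnj (x i) * x i) = complex_of_real N" unfolding xx N_def by simp
      finally show ?thesis using tB by simp
    qed
    also have "c * complex_of_real N = complex_of_real (N / real d)" unfolding c_def by simp
    finally show ?thesis .
  qed
  have SD: "(\<Sum>i<d. \<Sum>j<d. (cmod (D i j))^2) = N^2 * (real d - 1) / real d"
  proof -
    have "(cmod (D i j))^2 = (if i = j then (a i - N / real d)^2 else a i * a j)" for i j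
    proof (cases "i = j")
      case True
      then have "D i j = complex_of_real (a i - N / real d)" unfolding D_def using xx[of i]
        by (simp add: mult.commute)
      then have "cmod (D i j) = \<bar>a i - N / real d\<bar>" by (simp only: norm_of_real)
      then show ?thesis using True by simp
    next
      case False
      then show ?thesis unfolding D_def a_def by (simp add: norm_mult power_mult_distrib)
    qed
    then have "(\<Sum>i<d. \<Sum>j<d. (cmod (D i j))^2) = (\<Sum>i<d. \<Sum>j<d. if i = j then (a i - N / real d)^2 else a i * a j)"
      by simp
    also have "\<dots> = N^2 * (real d - 1) / real d" using d by (intro sum_D_sq) (auto simp: N_def)
    finally show ?thesis .
  qed
  have "cmod q \<le> sqrt (1 / (real d * (real d - 1))) * sqrt (N^2 * (real d - 1) / real d)"
    using cs_double[of B D d] unfolding q_def SB SD .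
  also have "\<dots> = sqrt ((N / real d)^2)"
    by (subst real_sqrt_mult[symmetric]) (use d in \<open>simp add: field_simps power2_eq_square\<close>)
  also have "\<dots> = N / real d" using N0 d by simp
  finally have qb: "cmod q \<le> N / real d" .
  have "- cmod q \<le> Re q" using abs_Re_le_cmod[of q] by linarith
  then show ?thesis unfolding Qeq using qb by simp
qed



lemma inner_scale: "inner_d d (\<lambda>k. s * p k) (\<lambda>k. s * q k) = s^2 * inner_d d p q"
  unfolding inner_d_def by (simp add: sum_distrib_left power2_eq_square algebra_simps)

lemma inner_ge: assumes "on_sphere d p" "on_sphere d q" shows "inner_d d p q \<ge> -1"
proof -
  have "0 \<le> (\<Sum>i<d^2 - 1. (p i + q i)^2)" by (simp add: sum_nonneg)
  also have "\<dots> = (\<Sum>i<d^2 - 1. (p i)^2) + (\<Sum>i<d^2 - 1. (q i)^2) + 2 * inner_d d p q"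
    unfolding inner_d_def by (simp add: power2_sum sum.distrib sum_distrib_left mult.assoc)
  finally show ?thesis using assms unfolding on_sphere_def by simp
qed

lemma inner_on_sphere: "on_sphere d p \<longleftrightarrow> inner_d d p p = 1"
  unfolding on_sphere_def inner_d_def by (simp add: power2_eq_square)

lemma shift_decomp:
  fixes d :: nat and \<rho> :: "nat \<Rightarrow> nat \<Rightarrow> complex"
  defines "B \<equiv> (\<lambda>i j. \<rho> i j - (if i = j then complex_of_real (1 / real d) else 0))"
  assumes d: "d \<ge> 1" and h: "herm d \<rho>" and tr: "(\<Sum>i<d. \<rho> i i) = 1"
  shows "herm d B" "(\<Sum>i<d. B i i) = 0"
    "\<rho> = (\<lambda>i j. (if i = j then complex_of_real (1 / real d) else 0) + B i j)"
proof -
  show "herm d B" unfolding herm_def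
  proof (intro allI impI)
    fix i j assume "i < d" "j < d"
    then have "\<rho> i j = cnj (\<rho> j i)" by (rule herm_D[OF h])
    then show "B i j = cnj (B j i)" unfolding B_def by simp
  qed
  show "(\<Sum>i<d. B i i) = 0"
    using tr d unfolding B_def by (simp add: sum_subtractf)
  show "\<rho> = (\<lambda>i j. (if i = j then complex_of_real (1 / real d) else 0) + B i j)"
    unfolding B_def by auto
qed

lemma Re_tr2_shift:
  assumes d: "d \<ge> 1" and tB: "(\<Sum>i<d. B i i) = 0" and tC: "(\<Sum>i<d. C i i) = 0"
  shows "Re (tr2 d (\<lambda>i j. (if i = j then complex_of_real (1 / real d) else 0) + B i j)
                  (\<lambda>i j. (if i = j then complex_of_real (1 / real d) else 0) + C i j)) = 1 / real d + Re (tr2 d B C)"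
  using d by (simp add: tr2_shift tB tC power2_eq_square)

lemma edge_rel:
  assumes d: "d \<ge> 2" and ip: "ip = real d * (real d - 1) * (t - 1 / real d)"
  shows "(1 - t) / 2 = (real d - 1) / real d * (1 - ip / (real d - 1)^2) / 2"
proof -
  have a: "real d - 1 \<noteq> 0" "real d \<noteq> 0" using d by auto
  have ip2: "ip = (real d - 1) * (real d * t - 1)"
  proof -
    have "real d * (t - 1 / real d) = real d * t - 1" using a by (simp add: right_diff_distrib)
    then show ?thesis unfolding ip by (simp add: mult.assoc mult.left_commute)
  qed
  have "ip / (real d - 1)^2 = (real d * t - 1) / (real d - 1)"
    unfolding ip2 power2_eq_square using a by simp
  then show ?thesis using a by (simp add: field_simps)
qed

lemma value_Re:
  assumes "finite V" "E \<subseteq> V \<times> V" "\<forall>(u, v)\<in>E. u \<noteq> v" "\<forall>t\<in>V. (\<Sum>i<d. \<rho> t i i) = 1"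
  shows "Re (tr_prod d V (H_G V E w) (prod_state V \<rho>)) =
    (1 / total_weight E w) * (\<Sum>(u, v)\<in>E. w (u, v) * ((1 - Re (tr2 d (\<rho> u) (\<rho> v))) / 2))"
proof -
  have "tr_prod d V (H_G V E w) (prod_state V \<rho>) =
    (1 / complex_of_real (total_weight E w)) *
    (\<Sum>(u, v)\<in>E. complex_of_real (w (u, v)) * ((1 - tr2 d (\<rho> u) (\<rho> v)) / 2))"
    by (rule trace_formula) (use assms in auto)
  then show ?thesis
    by (simp add: Re_sum case_prod_unfold Re_divide_of_real flip: of_real_divide)
qed

lemma value_eq:
  assumes "\<forall>e\<in>E. g e = (real d - 1) / real d * (1 - inner_d d (f (fst e)) (f (snd e)) / (real d - 1)^2) / 2"
  shows "(1 / total_weight E w) * (\<Sum>(u, v)\<in>E. w (u, v) * g (u, v)) = sphere_value d E w f"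
proof -
  have "(\<Sum>(u, v)\<in>E. w (u, v) * g (u, v)) =
    (\<Sum>(u, v)\<in>E. (1/2) * ((real d - 1) / real d) * (w (u, v) * (1 - inner_d d (f u) (f v) / (real d - 1)^2)))"
    using assms by (intro sum.cong refl) (auto simp: case_prod_unfold mult_ac)
  also have "\<dots> = (1/2) * ((real d - 1) / real d) * (\<Sum>(u, v)\<in>E. w (u, v) * (1 - inner_d d (f u) (f v) / (real d - 1)^2))"
    by (simp add: sum_distrib_left case_prod_unfold)
  finally show ?thesis unfolding sphere_value_def by simp
qed



lemma purity_tr2: "purity d \<rho> = tr2 d \<rho> \<rho>"
  unfolding purity_def tr2_def ..

lemma density_herm: "density_matrix d \<rho> \<Longrightarrow> herm d \<rho>"
  unfolding density_matrix_def herm_def by blast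

lemma density_tr: "density_matrix d \<rho> \<Longrightarrow> (\<Sum>i<d. \<rho> i i) = 1"
  unfolding density_matrix_def by blast

lemma inv_dm1: "d \<ge> 2 \<Longrightarrow> (1 / (of_nat d - 1) :: complex) = complex_of_real (1 / (real d - 1))"
  by (simp add: of_nat_diff)

lemma value_eq2:
  assumes "\<forall>(u, v)\<in>E. g u v = (real d - 1) / real d * (1 - inner_d d (f u) (f v) / (real d - 1)^2) / 2"
  shows "(1 / total_weight E w) * (\<Sum>(u, v)\<in>E. w (u, v) * g u v) = sphere_value d E w f"
proof -
  have "(\<Sum>(u, v)\<in>E. w (u, v) * g u v) = (\<Sum>(u, v)\<in>E. w (u, v) * (\<lambda>e. g (fst e) (snd e)) (u, v))"
    by (simp add: case_prod_unfold)
  also have "(1 / total_weight E w) * \<dots> = sphere_value d E w f"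
    using assms by (intro value_eq) (auto simp: case_prod_unfold)
  finally show ?thesis by simp
qed

lemma dir1:
  assumes d: "d \<ge> 2" and finV: "finite V" and EV: "E \<subseteq> V \<times> V" and uv: "\<forall>(u, v)\<in>E. u \<noteq> v"
    and dens: "\<forall>v\<in>V. density_matrix d (\<rho> v) \<and> purity d (\<rho> v) = 1 / (of_nat d - 1)"
  shows "\<exists>f. (\<forall>v\<in>V. on_sphere d (f v)) \<and> Re (tr_prod d V (H_G V E w) (prod_state V \<rho>)) = sphere_value d E w f"
proof -
  have d1: "d \<ge> 1" using d by simp
  define B where "B v = (\<lambda>i j. \<rho> v i j - (if i = j then complex_of_real (1 / real d) else 0))" for v
  define f where "f v = (\<lambda>k. sqrt (real d * (real d - 1)) * Fv d (B v) k)" for v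
  have hr: "herm d (\<rho> v)" and trr: "(\<Sum>i<d. \<rho> v i i) = 1"
    and pr: "Re (tr2 d (\<rho> v) (\<rho> v)) = 1 / (real d - 1)" if "v \<in> V" for v
  proof -
    have dv: "density_matrix d (\<rho> v)" and pv: "tr2 d (\<rho> v) (\<rho> v) = complex_of_real (1 / (real d - 1))"
      using dens that by (simp_all only: purity_tr2 inv_dm1[OF d] Ball_def)
    show "herm d (\<rho> v)" by (rule density_herm[OF dv])
    show "(\<Sum>i<d. \<rho> v i i) = 1" by (rule density_tr[OF dv])
    show "Re (tr2 d (\<rho> v) (\<rho> v)) = 1 / (real d - 1)" unfolding pv by simp
  qed
  have hB: "herm d (B v)" and tB: "(\<Sum>i<d. B v i i) = 0"
    and rB: "\<rho> v = (\<lambda>i j. (if i = j then complex_of_real (1 / real d) else 0) + B v i j)" if "v \<in> V" for v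
  proof -
    have bv: "B v = (\<lambda>i j. \<rho> v i j - (if i = j then complex_of_real (1 / real d) else 0))" by (simp only: B_def)
    note sd = shift_decomp[OF d1 hr[OF that] trr[OF that]]
    show "herm d (B v)" unfolding bv by (rule sd(1))
    show "(\<Sum>i<d. B v i i) = 0" unfolding bv by (rule sd(2))
    show "\<rho> v = (\<lambda>i j. (if i = j then complex_of_real (1 / real d) else 0) + B v i j)"
      unfolding bv by (intro ext) simp
  qed
  have sq: "(sqrt (real d * (real d - 1)))^2 = real d * (real d - 1)" using d by simp
  have ip: "inner_d d (f u) (f v) = real d * (real d - 1) * (Re (tr2 d (\<rho> u) (\<rho> v)) - 1 / real d)"
    if "u \<in> V" "v \<in> V" for u v
  proof -
    have "inner_d d (f u) (f v) = real d * (real d - 1) * Re (tr2 d (B u) (B v))"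
      unfolding f_def inner_scale sq using inner_F[OF d hB[OF that(1)] hB[OF that(2)] tB[OF that(1)] tB[OF that(2)]]
      by simp
    moreover have "Re (tr2 d (\<rho> u) (\<rho> v)) = 1 / real d + Re (tr2 d (B u) (B v))"
    proof -
      have "Re (tr2 d (\<lambda>i j. (if i = j then complex_of_real (1 / real d) else 0) + B u i j)
                  (\<lambda>i j. (if i = j then complex_of_real (1 / real d) else 0) + B v i j)) = 1 / real d + Re (tr2 d (B u) (B v))"
        by (rule Re_tr2_shift[where B="B u" and C="B v", OF d1 tB[OF that(1)] tB[OF that(2)]])
      then show ?thesis by (simp only: rB[OF that(1), symmetric] rB[OF that(2), symmetric])
    qed
    ultimately show ?thesis by simp
  qed
  have sph: "\<forall>v\<in>V. on_sphere d (f v)"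
  proof
    fix v assume v: "v \<in> V"
    have "inner_d d (f v) (f v) = real d * (real d - 1) * (1 / (real d - 1) - 1 / real d)"
      using ip[OF v v] pr[OF v] by simp
    also have "\<dots> = 1" using d by (simp add: field_simps)
    finally show "on_sphere d (f v)" unfolding inner_on_sphere .
  qed
  have "Re (tr_prod d V (H_G V E w) (prod_state V \<rho>)) =
    (1 / total_weight E w) * (\<Sum>(u, v)\<in>E. w (u, v) * ((1 - Re (tr2 d (\<rho> u) (\<rho> v))) / 2))"
    using finV EV uv trr by (intro value_Re) auto
  also have "\<dots> = sphere_value d E w f"
  proof (rule value_eq2, clarify)
    fix u v assume e: "(u, v) \<in> E"
    then have uv: "u \<in> V" "v \<in> V" using EV by auto
    show "(1 - Re (tr2 d (\<rho> u) (\<rho> v))) / 2 =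
      (real d - 1) / real d * (1 - inner_d d (f u) (f v) / (real d - 1)^2) / 2"
      by (rule edge_rel[OF d ip[OF uv]])
  qed
  finally show ?thesis using sph by blast
qed



lemma dir2:
  assumes d: "d \<ge> 2" and finV: "finite V" and EV: "E \<subseteq> V \<times> V" and uv: "\<forall>(u, v)\<in>E. u \<noteq> v"
    and sph: "\<forall>v\<in>V. on_sphere d (f v)"
  shows "\<exists>\<rho>. (\<forall>v\<in>V. density_matrix d (\<rho> v) \<and> purity d (\<rho> v) = 1 / (of_nat d - 1)) \<and>
     Re (tr_prod d V (H_G V E w) (prod_state V \<rho>)) = sphere_value d E w f"
proof -
  have d1: "d \<ge> 1" using d by simp
  define s where "s = 1 / sqrt (real d * (real d - 1))"
  have s2: "s^2 = 1 / (real d * (real d - 1))" unfolding s_def using d by (simp add: power_divide)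
  define C where "C v = (\<lambda>i j. complex_of_real s * Gm d (f v) i j)" for v
  define \<rho> where "\<rho> v = (\<lambda>i j. (if i = j then complex_of_real (1 / real d) else 0) + C v i j)" for v
  have rv: "\<rho> v = (\<lambda>i j. (if i = j then complex_of_real (1 / real d) else 0) + C v i j)" for v
    by (simp only: \<rho>_def)
  have hC: "herm d (C v)" for v
    unfolding herm_def
  proof (intro allI impI)
    fix i j assume "i < d" "j < d"
    then have "Gm d (f v) i j = cnj (Gm d (f v) j i)" by (rule herm_D[OF herm_Gm])
    then show "C v i j = cnj (C v j i)" unfolding C_def by simp
  qed
  have tC: "(\<Sum>i<d. C v i i) = 0" for v
    unfolding C_def by (simp add: sum_distrib_left[symmetric] trace_Gm[OF d1])
  have trC: "Re (tr2 d (C u) (C v)) = s^2 * inner_d d (f u) (f v)" for u v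
  proof -
    have "tr2 d (C u) (C v) = complex_of_real (s^2) * tr2 d (Gm d (f u)) (Gm d (f v))"
      unfolding tr2_def C_def by (simp add: sum_distrib_left power2_eq_square mult_ac)
    moreover have "Re (tr2 d (Gm d (f u)) (Gm d (f v))) = inner_d d (Fv d (Gm d (f u))) (Fv d (Gm d (f v)))"
      by (rule inner_F[OF d herm_Gm herm_Gm trace_Gm[OF d1] trace_Gm[OF d1], symmetric])
    moreover have "inner_d d (Fv d (Gm d (f u))) (Fv d (Gm d (f v))) = inner_d d (f u) (f v)"
      unfolding inner_d_def by (intro sum.cong refl) (simp add: F_Gm[OF d])
    ultimately show ?thesis by simp
  qed
  have trr: "Re (tr2 d (\<rho> u) (\<rho> v)) = 1 / real d + s^2 * inner_d d (f u) (f v)" for u v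
    unfolding rv using Re_tr2_shift[where B="C u" and C="C v", OF d1 tC tC] trC by simp
  have hr: "herm d (\<rho> v)" for v
    unfolding herm_def
  proof (intro allI impI)
    fix i j assume "i < d" "j < d"
    then have "C v i j = cnj (C v j i)" by (rule herm_D[OF hC])
    then show "\<rho> v i j = cnj (\<rho> v j i)" unfolding rv by simp
  qed
  have tr1: "(\<Sum>i<d. \<rho> v i i) = 1" for v
  proof -
    have "(\<Sum>i<d. \<rho> v i i) = (\<Sum>i<d. complex_of_real (1 / real d)) + (\<Sum>i<d. C v i i)"
      unfolding rv by (simp add: sum.distrib)
    then show ?thesis using tC d1 by simp
  qed
  have pur: "Re (tr2 d (\<rho> v) (\<rho> v)) = 1 / (real d - 1)" if "v \<in> V" for v
  proof -
    have "inner_d d (f v) (f v) = 1" using sph that inner_on_sphere by blast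
    then have "Re (tr2 d (\<rho> v) (\<rho> v)) = 1 / real d + 1 / (real d * (real d - 1))" using trr s2 by simp
    also have "\<dots> = 1 / (real d - 1)" using d by (simp add: field_simps)
    finally show ?thesis .
  qed
  have dens: "\<forall>v\<in>V. density_matrix d (\<rho> v) \<and> purity d (\<rho> v) = 1 / (of_nat d - 1)"
  proof
    fix v assume v: "v \<in> V"
    have "density_matrix d (\<rho> v)"
      unfolding density_matrix_def
      using hr[of v] psd[OF d hr tr1 pur[OF v]] tr1[of v] unfolding herm_def by blast
    moreover have "purity d (\<rho> v) = 1 / (of_nat d - 1)"
    proof -
      have "tr2 d (\<rho> v) (\<rho> v) = complex_of_real (Re (tr2 d (\<rho> v) (\<rho> v)))"
        unfolding tr2_herm_self[OF hr] by simp
      then show ?thesis unfolding purity_tr2 pur[OF v] inv_dm1[OF d] .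
    qed
    ultimately show "density_matrix d (\<rho> v) \<and> purity d (\<rho> v) = 1 / (of_nat d - 1)" ..
  qed
  have "Re (tr_prod d V (H_G V E w) (prod_state V \<rho>)) =
    (1 / total_weight E w) * (\<Sum>(u, v)\<in>E. w (u, v) * ((1 - Re (tr2 d (\<rho> u) (\<rho> v))) / 2))"
    using finV EV uv tr1 by (intro value_Re) auto
  also have "\<dots> = sphere_value d E w f"
  proof (rule value_eq2, clarify)
    fix u v assume e: "(u, v) \<in> E"
    have "inner_d d (f u) (f v) = real d * (real d - 1) * (Re (tr2 d (\<rho> u) (\<rho> v)) - 1 / real d)"
      unfolding trr s2 using d by (simp add: field_simps)
    then show "(1 - Re (tr2 d (\<rho> u) (\<rho> v))) / 2 =
      (real d - 1) / real d * (1 - inner_d d (f u) (f v) / (real d - 1)^2) / 2"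
      by (rule edge_rel[OF d])
  qed
  finally show ?thesis using dens by blast
qed



lemma sv_bound:
  assumes d: "d \<ge> 2" and finE: "finite E" and Ene: "E \<noteq> {}" and wpos: "\<forall>e\<in>E. w e > 0"
    and EV: "E \<subseteq> V \<times> V" and sph: "\<forall>v\<in>V. on_sphere d (f v)"
  shows "sphere_value d E w f \<le> (real ((d - 1)^2 + 1)) / (2 * real d * (real d - 1))"
proof -
  define W where "W = total_weight E w"
  have W0: "W > 0" unfolding W_def total_weight_def using finE Ene wpos by (intro sum_pos) auto
  define K where "K = 1 + 1 / (real d - 1)^2"
  have "(\<Sum>(u, v)\<in>E. w (u, v) * (1 - inner_d d (f u) (f v) / (real d - 1)^2)) \<le> (\<Sum>(u, v)\<in>E. w (u, v) * K)"
  proof (rule sum_mono, clarify)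
    fix u v assume e: "(u, v) \<in> E"
    then have "u \<in> V" "v \<in> V" using EV by auto
    then have "inner_d d (f u) (f v) \<ge> -1" using sph inner_ge by blast
    then have "- inner_d d (f u) (f v) / (real d - 1)^2 \<le> 1 / (real d - 1)^2"
      by (intro divide_right_mono) auto
    then have "1 - inner_d d (f u) (f v) / (real d - 1)^2 \<le> K" unfolding K_def by simp
    moreover have "w (u, v) > 0" using wpos e by auto
    ultimately show "w (u, v) * (1 - inner_d d (f u) (f v) / (real d - 1)^2) \<le> w (u, v) * K"
      by (intro mult_left_mono) auto
  qed
  also have "\<dots> = W * K" unfolding W_def total_weight_def by (simp add: sum_distrib_right case_prod_unfold)
  finally have S: "(\<Sum>(u, v)\<in>E. w (u, v) * (1 - inner_d d (f u) (f v) / (real d - 1)^2)) \<le> W * K" .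
  have c0: "0 \<le> (1/2) * ((real d - 1) / real d) * (1 / W)" using d W0 by simp
  have "sphere_value d E w f \<le> (1/2) * ((real d - 1) / real d) * (1 / W) * (W * K)"
    unfolding sphere_value_def W_def[symmetric] by (rule mult_left_mono[OF S c0])
  also have "\<dots> = (1/2) * ((real d - 1) / real d) * K" using W0 by simp
  also have "\<dots> = (real ((d - 1)^2 + 1)) / (2 * real d * (real d - 1))"
  proof -
    define D where "D = real d - 1"
    have D0: "D > 0" unfolding D_def using d by simp
    have rd: "real d = D + 1" unfolding D_def by simp
    have rn: "real ((d - 1)^2 + 1) = D^2 + 1" unfolding D_def using d by (simp add: of_nat_diff)
    have gen: "1/2 * (D/(D+1)) * (1 + 1/D^2) = (D^2+1)/(2*(D+1)*D)"
    proof -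
      have n: "D \<noteq> 0" "D + 1 \<noteq> 0" using D0 by auto
      have "1 + 1/D^2 = (D^2+1)/D^2" using n by (simp add: field_simps)
      then have "1/2 * (D/(D+1)) * (1 + 1/D^2) = (D * (D^2+1)) / (2 * (D+1) * D^2)" by simp
      also have "\<dots> = (D^2+1)/(2*(D+1)*D)" using n by (simp add: power2_eq_square)
      finally show ?thesis .
    qed
    show ?thesis unfolding K_def rn unfolding D_def[symmetric] unfolding rd by (rule gen)
  qed
  finally show ?thesis .
qed

theorem mainTheorem12:
  fixes d :: nat and V :: "'a set" and E :: "('a \<times> 'a) set" and w :: "'a \<times> 'a \<Rightarrow> real"
  assumes "d \<ge> 2"
    and "finite V"
    and "E \<subseteq> V \<times> V"
    and "\<forall>(u, v)\<in>E. u \<noteq> v"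
    and "\<forall>(u, v)\<in>E. (v, u) \<notin> E"
    and "E \<noteq> {}"
    and "\<forall>e\<in>E. w e > 0"
  shows "MixedProd d V E w = (SUP f \<in> {f. \<forall>v\<in>V. on_sphere d (f v)}. sphere_value d E w f)
    \<and> MixedProd d V E w \<le> (real ((d - 1)^2 + 1)) / (2 * real d * (real d - 1))
    \<and> (real ((d - 1)^2 + 1)) / (2 * real d * (real d - 1)) = 1/2 - (real d - 2) / (2 * real d * (real d - 1))"
proof -
  note d = assms(1) and finV = assms(2) and EV = assms(3) and uv = assms(4) and Ene = assms(6) and wpos = assms(7)
  have finE: "finite E" using finV EV finite_subset by (metis finite_cartesian_product)
  define S1 where "S1 = {Re (tr_prod d V (H_G V E w) (prod_state V \<rho>)) | \<rho>.
      \<forall>v\<in>V. density_matrix d (\<rho> v) \<and> purity d (\<rho> v) = 1 / (of_nat d - 1)}"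
  define A where "A = {f. \<forall>v\<in>V. on_sphere d (f v)}"
  define S2 where "S2 = sphere_value d E w ` A"
  have M: "MixedProd d V E w = Sup S1" unfolding MixedProd_def S1_def ..
  have "S1 = S2"
  proof
    show "S1 \<subseteq> S2"
    proof
      fix r assume "r \<in> S1"
      then obtain \<rho> where r: "r = Re (tr_prod d V (H_G V E w) (prod_state V \<rho>))"
        and dens: "\<forall>v\<in>V. density_matrix d (\<rho> v) \<and> purity d (\<rho> v) = 1 / (of_nat d - 1)"
        unfolding S1_def by blast
      obtain f where "\<forall>v\<in>V. on_sphere d (f v)" "Re (tr_prod d V (H_G V E w) (prod_state V \<rho>)) = sphere_value d E w f"
        using dir1[OF d finV EV uv dens] by blast
      then show "r \<in> S2" unfolding S2_def A_def r by blast
    qed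
  next
    show "S2 \<subseteq> S1"
    proof
      fix r assume "r \<in> S2"
      then obtain f where f: "\<forall>v\<in>V. on_sphere d (f v)" and r: "r = sphere_value d E w f"
        unfolding S2_def A_def by blast
      obtain \<rho> where "\<forall>v\<in>V. density_matrix d (\<rho> v) \<and> purity d (\<rho> v) = 1 / (of_nat d - 1)"
        "Re (tr_prod d V (H_G V E w) (prod_state V \<rho>)) = sphere_value d E w f"
        using dir2[OF d finV EV uv f] by blast
      then show "r \<in> S1" unfolding S1_def r by force
    qed
  qed
  then have P1: "MixedProd d V E w = (SUP f \<in> {f. \<forall>v\<in>V. on_sphere d (f v)}. sphere_value d E w f)"
    unfolding M S2_def A_def by simp
  have ne: "S2 \<noteq> {}"
  proof -
    define f0 where "f0 = (\<lambda>(v::'a) (k::nat). if k = 0 then (1::real) else 0)"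
    have pos: "0 < d^2 - 1"
    proof -
      have "4 \<le> d^2" using d power_mono[of 2 d 2] by simp
      then show ?thesis by simp
    qed
    have "on_sphere d (f0 v)" for v
    proof -
      have "(\<Sum>i<d^2 - 1. (f0 v i)^2) = (\<Sum>i<d^2 - 1. if i = 0 then 1 else 0)"
        by (intro sum.cong refl) (simp add: f0_def)
      also have "\<dots> = 1" using pos by (simp add: sum.delta')
      finally show ?thesis unfolding on_sphere_def .
    qed
    then have "f0 \<in> A" unfolding A_def by simp
    then show ?thesis unfolding S2_def by blast
  qed
  have P2: "MixedProd d V E w \<le> (real ((d - 1)^2 + 1)) / (2 * real d * (real d - 1))"
    unfolding M \<open>S1 = S2\<close>
  proof (rule cSup_least[OF ne])
    fix x assume "x \<in> S2"
    then obtain f where f: "\<forall>v\<in>V. on_sphere d (f v)" and x: "x = sphere_value d E w f"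
      unfolding S2_def A_def by blast
    show "x \<le> (real ((d - 1)^2 + 1)) / (2 * real d * (real d - 1))"
      unfolding x by (rule sv_bound[OF d finE Ene wpos EV f])
  qed
  have P3: "(real ((d - 1)^2 + 1)) / (2 * real d * (real d - 1)) = 1/2 - (real d - 2) / (2 * real d * (real d - 1))"
    using d by (simp add: of_nat_diff field_simps power2_eq_square)
  show ?thesis using P1 P2 P3 by blast
qed


end
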